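(* Let $n\ge2$ and let $(X,\delta)$ be the diversity on an $n$-point set $X$ with $\delta(A)=|A|-1$ for all nonempty $A\subseteq X$ (and $\delta(\emptyset)=0$). Then every embedding of $(X,\delta)$ into $\ell_1^k$ has distortion at least $(n-1)/k$.
   Context: The $\ell_1^k$ diversity is $(\mathbb{R}^k,\delta_1)$ with $\delta_1(A)=\sum_{i=1}^k\max\{|a_i-b_i|:a,b\in A\}$. A map $\phi:X_1\to X_2$ between diversities $(X_1,\delta_1)$, $(X_2,\delta_2)$ has distortion $c\ge1$ if there are $c_1,c_2>0$ with $c=c_1c_2$ and $\frac1{c_1}\delta_1(A)\le\delta_2(\phi(A))\le c_2\delta_1(A)$ for all finite $A\subseteq X_1$. *)

theory Defs
  imports "HOL-Analysis.Analysis"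
begin

definition l1_div :: "(real^'k) set \<Rightarrow> real" where
  "l1_div A = (if A = {} then 0
     else (\<Sum>i\<in>UNIV. Max {\<bar>a $ i - b $ i\<bar> | a b. a \<in> A \<and> b \<in> A}))"

definition card_div :: "'a set \<Rightarrow> real" where
  "card_div A = (if A = {} then 0 else real (card A) - 1)"

definition has_distortion ::
  "('a set \<Rightarrow> real) \<Rightarrow> 'a set \<Rightarrow> ('b set \<Rightarrow> real) \<Rightarrow> ('a \<Rightarrow> 'b) \<Rightarrow> real \<Rightarrow> bool" where
  "has_distortion d1 X1 d2 \<phi> c \<longleftrightarrow>
     (\<exists>c1 c2. c1 > 0 \<and> c2 > 0 \<and> c = c1 * c2 \<and>
        (\<forall>A. A \<subseteq> X1 \<and> finite A \<longrightarrow>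
             d1 A / c1 \<le> d2 (\<phi> ` A) \<and> d2 (\<phi> ` A) \<le> c2 * d1 A))"

end

theory Submission
  imports Defs
begin

lemma pairset_eq: "{f a b | a b. a \<in> A \<and> b \<in> A} = (\<lambda>(a,b). f a b) ` (A \<times> A)"
  by auto

lemma coord_le_l1: "\<bar>a $ i - b $ i\<bar> \<le> l1_div {a::real^'k, b}"
proof -
  let ?T = "\<lambda>j. {\<bar>x $ j - y $ j\<bar> | x y. x \<in> {a,b} \<and> y \<in> {a,b}}"
  have fin: "finite (?T j)" for j unfolding pairset_eq by auto
  have ge: "\<bar>x $ j - y $ j\<bar> \<le> Max (?T j)" if "x \<in> {a,b}" "y \<in> {a,b}" for x y j
    using fin that by (intro Max_ge) auto
  have nn: "0 \<le> Max (?T j)" for j using ge[of a a j] by simp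
  have "\<bar>a $ i - b $ i\<bar> \<le> Max (?T i)" using ge by simp
  also have "\<dots> \<le> (\<Sum>j\<in>UNIV. Max (?T j))"
    by (rule member_le_sum) (use nn in auto)
  finally show ?thesis unfolding l1_div_def by simp
qed

theorem proposition15:
  fixes X :: "'a set" and \<phi> :: "'a \<Rightarrow> real^'k" and n :: nat and c :: real
  assumes "finite X" and "card X = n" and "n \<ge> 2"
    and "inj_on \<phi> X"
    and "has_distortion card_div X l1_div \<phi> c"
  shows "c \<ge> (real n - 1) / real CARD('k)"
proof -
  obtain c1 c2 where c: "c1 > 0" "c2 > 0" "c = c1 * c2"
    and H: "\<And>A. A \<subseteq> X \<Longrightarrow> finite A \<Longrightarrow> card_div A / c1 \<le> l1_div (\<phi> ` A) \<and> l1_div (\<phi> ` A) \<le> c2 * card_div A"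
    using assms(5) unfolding has_distortion_def by blast
  have Xne: "X \<noteq> {}" using assms(2,3) by auto
  have low: "(real n - 1) / c1 \<le> l1_div (\<phi> ` X)"
    using H[of X] assms(1,2) Xne by (simp add: card_div_def)
  let ?S = "\<lambda>i. {\<bar>a $ i - b $ i\<bar> | a b. a \<in> \<phi> ` X \<and> b \<in> \<phi> ` X}"
  have trm: "Max (?S i) \<le> c2" for i
  proof -
    have fin: "finite (?S i)" unfolding pairset_eq using assms(1) by auto
    have ne: "?S i \<noteq> {}" using Xne by auto
    have "Max (?S i) \<in> ?S i" using Max_in[OF fin ne] .
    then obtain x y where xy: "x \<in> X" "y \<in> X" "Max (?S i) = \<bar>\<phi> x $ i - \<phi> y $ i\<bar>" by blast
    have "\<bar>\<phi> x $ i - \<phi> y $ i\<bar> \<le> l1_div (\<phi> ` {x,y})" using coord_le_l1 by simp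
    also have "\<dots> \<le> c2 * card_div {x,y}" using H[of "{x,y}"] xy by auto
    also have "card_div {x,y} \<le> 1" unfolding card_div_def
      by (cases "x = y") auto
    hence "c2 * card_div {x,y} \<le> c2" using c(2) by simp
    finally show ?thesis using xy by simp
  qed
  have up: "l1_div (\<phi> ` X) \<le> real CARD('k) * c2"
  proof -
    have "l1_div (\<phi> ` X) = (\<Sum>i\<in>UNIV. Max (?S i))" unfolding l1_div_def using Xne by simp
    also have "\<dots> \<le> (\<Sum>i\<in>(UNIV::'k set). c2)" by (rule sum_mono) (use trm in auto)
    finally show ?thesis by simp
  qed
  have "(real n - 1) / c1 \<le> real CARD('k) * c2" using low up by linarith
  hence "real n - 1 \<le> real CARD('k) * c2 * c1" using c(1) by (simp add: divide_le_eq)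
  hence "real n - 1 \<le> real CARD('k) * c" using c(3) by (simp add: mult_ac)
  thus ?thesis by (simp add: divide_le_eq mult.commute)
qed

end
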